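(* Let $\mathcal{D}\in\mathbb{C}^{\mathbf{N}(s)\times\mathbf{N}(s)}$ with $\mathrm{ind}(\mathcal{D})=k$, and let $\mathcal{B}\in\mathscr{R}(\mathcal{D}^k)$. Then $\mathcal{D}^{c,\dagger}*_s\mathcal{B}$ is the unique solution $\mathcal{Z}$ of the multilinear system $\mathcal{D}*_s\mathcal{Z}=\mathcal{B}$ lying in $\mathscr{R}(\mathcal{D}^\dagger*_s\mathcal{D}^k)$.
   Context: For positive integers $N_1,\dots,N_s$ write $\mathbf{N}(s)=N_1\times\cdots\times N_s$. For $\mathcal{A}\in\mathbb{C}^{\mathbf{I}(m)\times\mathbf{K}(p)}$ and $\mathcal{B}\in\mathbb{C}^{\mathbf{K}(p)\times\mathbf{J}(n)}$ the Einstein product is the tensor $\mathcal{A}*_p\mathcal{B}\in\mathbb{C}^{\mathbf{I}(m)\times\mathbf{J}(n)}$ with entries $(\mathcal{A}*_p\mathcal{B})_{i_1\dots i_m j_1\dots j_n}=\sum_{k_1,\dots,k_p}\mathcal{A}_{i_1\dots i_m k_1\dots k_p}\mathcal{B}_{k_1\dots k_p j_1\dots j_n}$; the case $n=0$ (so $\mathcal{B}\in\mathbb{C}^{\mathbf{K}(p)}$) is allowed. For $\mathcal{D}\in\mathbb{C}^{\mathbf{N}(s)\times\mathbf{N}(s)}$, powers are $\mathcal{D}^0=\mathcal{I}$, $\mathcal{D}^{j+1}=\mathcal{D}*_s\mathcal{D}^j$, where $\mathcal{I}$ is the identity tensor with entries $\mathcal{I}_{i_1\dots i_s j_1\dots j_s}=\prod_{t=1}^s\delta_{i_tj_t}$.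 The conjugate transpose $\mathcal{A}^*$ of $\mathcal{A}\in\mathbb{C}^{\mathbf{M}(m)\times\mathbf{N}(n)}$ has entries $(\mathcal{A}^* )_{j_1\dots j_n i_1\dots i_m}=\overline{\mathcal{A}_{i_1\dots i_m j_1\dots j_n}}$. For $\mathcal{A}\in\mathbb{C}^{\mathbf{M}(m)\times\mathbf{N}(n)}$, $\mathscr{R}(\mathcal{A})=\{\mathcal{A}*_n\mathcal{E}:\mathcal{E}\in\mathbb{C}^{\mathbf{N}(n)}\}$ and $\mathscr{N}(\mathcal{A})=\{\mathcal{F}\in\mathbb{C}^{\mathbf{N}(n)}:\mathcal{A}*_n\mathcal{F}=\mathcal{O}\}$. The index $\mathrm{ind}(\mathcal{D})$ of $\mathcal{D}\in\mathbb{C}^{\mathbf{N}(s)\times\mathbf{N}(s)}$ is the smallest nonnegative integer $k$ with $\dim\mathscr{R}(\mathcal{D}^k)=\dim\mathscr{R}(\mathcal{D}^{k+1})$. The Moore–Penrose inverse $\mathcal{D}^\dagger$ of $\mathcal{D}\in\mathbb{C}^{\mathbf{N}(s)\times\mathbf{N}(s)}$ is the unique $\mathcal{Y}$ with $\mathcal{D}*_s\mathcal{Y}*_s\mathcal{D}=\mathcal{D}$, $\mathcal{Y}*_s\mathcal{D}*_s\mathcal{Y}=\mathcal{Y}$, $(\mathcal{D}*_s\mathcal{Y})^*=\mathcal{D}*_s\mathcal{Y}$, $(\mathcal{Y}*_s\mathcal{D})^*=\mathcal{Y}*_s\mathcal{D}$. With $k=\mathrm{ind}(\mathcal{D})$,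 the Drazin inverse $\mathcal{D}^{\mathrm D}$ is the unique $\mathcal{Y}$ with $\mathcal{Y}*_s\mathcal{D}^{k+1}=\mathcal{D}^k$, $\mathcal{Y}*_s\mathcal{D}*_s\mathcal{Y}=\mathcal{Y}$, $\mathcal{D}*_s\mathcal{Y}=\mathcal{Y}*_s\mathcal{D}$. The CMP inverse is $\mathcal{D}^{c,\dagger}=\mathcal{D}^\dagger*_s\mathcal{D}*_s\mathcal{D}^{\mathrm D}*_s\mathcal{D}*_s\mathcal{D}^\dagger$. *)

theory Defs
  imports Complex_Main "HOL-Library.Function_Algebras"
begin

text \<open>A tensor in C^{N(s)} is a function nat list => complex vanishing outside the
 multi-index set; a tensor in C^{N(s) x N(s)} is a function of two multi-indices
 vanishing unless both are valid.\<close>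

definition idx :: "nat list \<Rightarrow> nat list set" where
  "idx N = {is. length is = length N \<and> (\<forall>t<length N. is ! t < N ! t)}"

definition tensor1 :: "nat list \<Rightarrow> (nat list \<Rightarrow> complex) \<Rightarrow> bool" where
  "tensor1 N B \<longleftrightarrow> (\<forall>i. i \<notin> idx N \<longrightarrow> B i = 0)"

definition tensor2 :: "nat list \<Rightarrow> (nat list \<Rightarrow> nat list \<Rightarrow> complex) \<Rightarrow> bool" where
  "tensor2 N A \<longleftrightarrow> (\<forall>i j. i \<notin> idx N \<or> j \<notin> idx N \<longrightarrow> A i j = 0)"

definition ein :: "nat list \<Rightarrow> (nat list \<Rightarrow> nat list \<Rightarrow> complex) \<Rightarrow>
    (nat list \<Rightarrow> nat list \<Rightarrow> complex) \<Rightarrow> (nat list \<Rightarrow> nat list \<Rightarrow> complex)" where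
  "ein N A B = (\<lambda>i j. if i \<in> idx N \<and> j \<in> idx N
      then \<Sum>k\<in>idx N. A i k * B k j else 0)"

definition einv :: "nat list \<Rightarrow> (nat list \<Rightarrow> nat list \<Rightarrow> complex) \<Rightarrow>
    (nat list \<Rightarrow> complex) \<Rightarrow> (nat list \<Rightarrow> complex)" where
  "einv N A E = (\<lambda>i. if i \<in> idx N then \<Sum>k\<in>idx N. A i k * E k else 0)"

definition tid :: "nat list \<Rightarrow> (nat list \<Rightarrow> nat list \<Rightarrow> complex)" where
  "tid N = (\<lambda>i j. if i \<in> idx N \<and> j \<in> idx N \<and> i = j then 1 else 0)"

fun tpow :: "nat list \<Rightarrow> (nat list \<Rightarrow> nat list \<Rightarrow> complex) \<Rightarrow> nat \<Rightarrow>
    (nat list \<Rightarrow> nat list \<Rightarrow> complex)" where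
  "tpow N D 0 = tid N"
| "tpow N D (Suc j) = ein N D (tpow N D j)"

definition ctrans :: "(nat list \<Rightarrow> nat list \<Rightarrow> complex) \<Rightarrow> (nat list \<Rightarrow> nat list \<Rightarrow> complex)" where
  "ctrans A = (\<lambda>j i. cnj (A i j))"

definition trange :: "nat list \<Rightarrow> (nat list \<Rightarrow> nat list \<Rightarrow> complex) \<Rightarrow> (nat list \<Rightarrow> complex) set" where
  "trange N A = {einv N A E | E. tensor1 N E}"

definition cdim :: "(nat list \<Rightarrow> complex) set \<Rightarrow> nat" where
  "cdim S = vector_space.dim (\<lambda>(c::complex) f x. c * f x) S"

definition tind :: "nat list \<Rightarrow> (nat list \<Rightarrow> nat list \<Rightarrow> complex) \<Rightarrow> nat" where
  "tind N D = (LEAST k. cdim (trange N (tpow N D k)) = cdim (trange N (tpow N D (Suc k))))"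

definition mpinv :: "nat list \<Rightarrow> (nat list \<Rightarrow> nat list \<Rightarrow> complex) \<Rightarrow> (nat list \<Rightarrow> nat list \<Rightarrow> complex)" where
  "mpinv N D = (THE Y. tensor2 N Y \<and> ein N (ein N D Y) D = D \<and> ein N (ein N Y D) Y = Y
      \<and> ctrans (ein N D Y) = ein N D Y \<and> ctrans (ein N Y D) = ein N Y D)"

definition drazin :: "nat list \<Rightarrow> (nat list \<Rightarrow> nat list \<Rightarrow> complex) \<Rightarrow> (nat list \<Rightarrow> nat list \<Rightarrow> complex)" where
  "drazin N D = (let k = tind N D in THE Y. tensor2 N Y \<and> ein N Y (tpow N D (Suc k)) = tpow N D k
      \<and> ein N (ein N Y D) Y = Y \<and> ein N D Y = ein N Y D)"

definition cmp :: "nat list \<Rightarrow> (nat list \<Rightarrow> nat list \<Rightarrow> complex) \<Rightarrow> (nat list \<Rightarrow> nat list \<Rightarrow> complex)" where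
  "cmp N D = ein N (mpinv N D) (ein N D (ein N (drazin N D) (ein N D (mpinv N D))))"

end

theory Submission
  imports Defs
begin

lemma fsum_apply: "(sum F S) x = sum (\<lambda>s. F s x) S"
  by (induction S rule: infinite_finite_induct) auto

lemma finite_idx: "finite (idx N)"
proof -
  have "idx N \<subseteq> {xs. set xs \<subseteq> {..<Max (insert 0 (set N))} \<and> length xs = length N}"
  proof
    fix xs assume "xs \<in> idx N"
    then have l: "length xs = length N" and b: "\<forall>t<length N. xs ! t < N ! t" by (auto simp: idx_def)
    have "set xs \<subseteq> {..<Max (insert 0 (set N))}"
    proof
      fix x assume "x \<in> set xs"
      then obtain t where t: "t < length xs" "xs ! t = x" by (auto simp: in_set_conv_nth)
      then have "x < N ! t" using b l by auto
      also have "N ! t \<le> Max (insert 0 (set N))" using t l by (intro Max_ge) auto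
      finally show "x \<in> {..<Max (insert 0 (set N))}" by simp
    qed
    then show "xs \<in> {xs. set xs \<subseteq> {..<Max (insert 0 (set N))} \<and> length xs = length N}" using l by simp
  qed
  then show ?thesis by (rule finite_subset) (rule finite_lists_length_eq, simp)
qed

lemma tensor2_ein[simp]: "tensor2 N (ein N A B)"
  by (simp add: tensor2_def ein_def)
lemma tensor1_einv[simp]: "tensor1 N (einv N A B)"
  by (simp add: tensor1_def einv_def)
lemma tensor2_tid[simp]: "tensor2 N (tid N)"
  by (simp add: tensor2_def tid_def)

lemma ein_assoc: "ein N (ein N A B) C = ein N A (ein N B C)"
proof (rule ext, rule ext)
  fix i j
  show "ein N (ein N A B) C i j = ein N A (ein N B C) i j"
  proof (cases "i \<in> idx N \<and> j \<in> idx N")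
    case True
    have "ein N (ein N A B) C i j = (\<Sum>k\<in>idx N. (\<Sum>l\<in>idx N. A i l * B l k) * C k j)"
      using True by (simp add: ein_def)
    also have "\<dots> = (\<Sum>k\<in>idx N. \<Sum>l\<in>idx N. A i l * B l k * C k j)"
      by (simp add: sum_distrib_right)
    also have "\<dots> = (\<Sum>l\<in>idx N. \<Sum>k\<in>idx N. A i l * B l k * C k j)"
      by (rule sum.swap)
    also have "\<dots> = (\<Sum>l\<in>idx N. A i l * (\<Sum>k\<in>idx N. B l k * C k j))"
      by (simp add: sum_distrib_left mult.assoc)
    also have "\<dots> = ein N A (ein N B C) i j"
      using True by (simp add: ein_def)
    finally show ?thesis .
  qed (auto simp: ein_def)
qed

lemma einv_einv: "einv N A (einv N B v) = einv N (ein N A B) v"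
proof (rule ext)
  fix i
  show "einv N A (einv N B v) i = einv N (ein N A B) v i"
  proof (cases "i \<in> idx N")
    case True
    have "einv N A (einv N B v) i = (\<Sum>k\<in>idx N. A i k * (\<Sum>l\<in>idx N. B k l * v l))"
      using True by (simp add: einv_def)
    also have "\<dots> = (\<Sum>k\<in>idx N. \<Sum>l\<in>idx N. A i k * B k l * v l)"
      by (simp add: sum_distrib_left mult.assoc)
    also have "\<dots> = (\<Sum>l\<in>idx N. \<Sum>k\<in>idx N. A i k * B k l * v l)"
      by (rule sum.swap)
    also have "\<dots> = (\<Sum>l\<in>idx N. (\<Sum>k\<in>idx N. A i k * B k l) * v l)"
      by (simp add: sum_distrib_right)
    also have "\<dots> = einv N (ein N A B) v i"
      using True by (simp add: einv_def ein_def)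
    finally show ?thesis .
  qed (auto simp: einv_def)
qed

lemma tid_left: "tensor2 N A \<Longrightarrow> ein N (tid N) A = A"
proof (rule ext, rule ext)
  fix i j assume T: "tensor2 N A"
  show "ein N (tid N) A i j = A i j"
  proof (cases "i \<in> idx N \<and> j \<in> idx N")
    case True
    have "ein N (tid N) A i j = (\<Sum>k\<in>idx N. (if k = i then A i j else 0))"
      using True by (auto simp: ein_def tid_def intro!: sum.cong)
    also have "\<dots> = A i j" using True finite_idx[of N] by simp
    finally show ?thesis .
  qed (use T in \<open>auto simp: ein_def tensor2_def\<close>)
qed

lemma tid_right: "tensor2 N A \<Longrightarrow> ein N A (tid N) = A"
proof (rule ext, rule ext)
  fix i j assume T: "tensor2 N A"
  show "ein N A (tid N) i j = A i j"
  proof (cases "i \<in> idx N \<and> j \<in> idx N")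
    case True
    have "ein N A (tid N) i j = (\<Sum>k\<in>idx N. (if k = j then A i j else 0))"
      using True by (auto simp: ein_def tid_def intro!: sum.cong)
    also have "\<dots> = A i j" using True finite_idx[of N] by simp
    finally show ?thesis .
  qed (use T in \<open>auto simp: ein_def tensor2_def\<close>)
qed

lemma einv_tid: "tensor1 N v \<Longrightarrow> einv N (tid N) v = v"
proof (rule ext)
  fix i assume T: "tensor1 N v"
  show "einv N (tid N) v i = v i"
  proof (cases "i \<in> idx N")
    case True
    have "einv N (tid N) v i = (\<Sum>k\<in>idx N. (if k = i then v i else 0))"
      using True by (auto simp: einv_def tid_def intro!: sum.cong)
    also have "\<dots> = v i" using True finite_idx[of N] by simp
    finally show ?thesis .
  qed (use T in \<open>auto simp: einv_def tensor1_def\<close>)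
qed

lemma tensor2_ctrans[simp]: "tensor2 N A \<Longrightarrow> tensor2 N (ctrans A)"
  unfolding tensor2_def ctrans_def by auto
lemma ctrans_ctrans[simp]: "ctrans (ctrans A) = A"
  by (simp add: ctrans_def)
lemma ctrans_ein: "ctrans (ein N A B) = ein N (ctrans B) (ctrans A)"
  by (auto simp: ctrans_def ein_def fun_eq_iff mult.commute)
lemma ctrans_tid[simp]: "ctrans (tid N) = tid N"
  by (auto simp: ctrans_def tid_def fun_eq_iff)
lemma ctrans_diff: "ctrans (A - B) = ctrans A - ctrans B"
  by (auto simp: ctrans_def fun_eq_iff)

lemma ein_diff_right: "ein N A (B - C) = ein N A B - ein N A C"
  by (auto simp: ein_def fun_eq_iff algebra_simps sum_subtractf)
lemma ein_diff_left: "ein N (A - B) C = ein N A C - ein N B C"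
  by (auto simp: ein_def fun_eq_iff algebra_simps sum_subtractf)
lemma ein_zero_right[simp]: "ein N A 0 = 0"
  by (auto simp: ein_def fun_eq_iff)
lemma ein_zero_left[simp]: "ein N 0 A = 0"
  by (auto simp: ein_def fun_eq_iff)
lemma tensor2_diff[simp]: "tensor2 N A \<Longrightarrow> tensor2 N B \<Longrightarrow> tensor2 N (A - B)"
  by (simp add: tensor2_def)

lemma ctrans_self_zero:
  assumes T: "tensor2 N B" and Z: "ein N (ctrans B) B = 0"
  shows "B = 0"
proof (rule ext, rule ext)
  fix i j
  show "B i j = 0 i j"
  proof (cases "i \<in> idx N \<and> j \<in> idx N")
    case True
    have "0 = ein N (ctrans B) B j j" using Z by simp
    also have "\<dots> = (\<Sum>k\<in>idx N. complex_of_real ((cmod (B k j))^2))"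
      using True by (auto simp: ein_def ctrans_def intro!: sum.cong)
        (metis complex_norm_square mult.commute of_real_power)
    also have "\<dots> = complex_of_real (\<Sum>k\<in>idx N. (cmod (B k j))^2)" by simp
    finally have "complex_of_real (\<Sum>k\<in>idx N. (cmod (B k j))^2) = 0" by simp
    then have "(\<Sum>k\<in>idx N. (cmod (B k j))^2) = 0" using of_real_eq_0_iff by blast
    then have "\<forall>k\<in>idx N. (cmod (B k j))^2 = 0"
      using finite_idx[of N] by (subst (asm) sum_nonneg_eq_0_iff) auto
    then show ?thesis using True by simp
  qed (use T in \<open>auto simp: tensor2_def\<close>)
qed


definition vsc :: "complex \<Rightarrow> (nat list \<Rightarrow> complex) \<Rightarrow> (nat list \<Rightarrow> complex)" where
  "vsc c f = (\<lambda>x. c * f x)"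

interpretation cv: vector_space vsc
  by unfold_locales (auto simp: vsc_def algebra_simps fun_eq_iff)

lemma vsc_eq: "vsc = (\<lambda>(c::complex) f x. c * f x)"
  by (simp add: vsc_def fun_eq_iff)

lemma cdim_eq: "cdim S = cv.dim S"
  unfolding cdim_def vsc_eq ..

lemma einv_add: "einv N A (E + F) = einv N A E + einv N A F"
  by (auto simp: einv_def fun_eq_iff algebra_simps sum.distrib)
lemma einv_vsc: "einv N A (vsc c E) = vsc c (einv N A E)"
  by (auto simp: einv_def vsc_def fun_eq_iff algebra_simps sum_distrib_left)

lemma trange_subspace: "cv.subspace (trange N A)"
  unfolding cv.subspace_def trange_def
proof (intro conjI ballI allI)
  show "0 \<in> {einv N A E |E. tensor1 N E}"
    by (rule CollectI, rule exI[of _ 0]) (auto simp: einv_def tensor1_def fun_eq_iff)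
next
  fix x y assume "x \<in> {einv N A E |E. tensor1 N E}" "y \<in> {einv N A E |E. tensor1 N E}"
  then obtain E F where "x = einv N A E" "y = einv N A F" "tensor1 N E" "tensor1 N F" by blast
  then show "x + y \<in> {einv N A E |E. tensor1 N E}"
    by (intro CollectI exI[of _ "E + F"]) (auto simp: einv_add tensor1_def)
next
  fix c x assume "x \<in> {einv N A E |E. tensor1 N E}"
  then obtain E where "x = einv N A E" "tensor1 N E" by blast
  then show "vsc c x \<in> {einv N A E |E. tensor1 N E}"
    by (intro CollectI exI[of _ "vsc c E"] conjI, simp add: einv_vsc, simp add: tensor1_def vsc_def)
qed

definition col where "col N A j = (\<lambda>i. if i \<in> idx N then A i j else 0)"

lemma trange_span: "trange N A \<subseteq> cv.span (col N A ` idx N)"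
proof
  fix x assume "x \<in> trange N A"
  then obtain E where x: "x = einv N A E" by (auto simp: trange_def)
  have "x = (\<Sum>j\<in>idx N. vsc (E j) (col N A j))"
    unfolding x by (auto simp: fun_eq_iff fsum_apply einv_def vsc_def col_def mult.commute)
  also have "\<dots> \<in> cv.span (col N A ` idx N)"
    by (intro cv.span_sum cv.span_scale cv.span_base) auto
  finally show "x \<in> cv.span (col N A ` idx N)" .
qed

lemma dim_eq_sub:
  assumes ST: "S \<subseteq> T" and sS: "cv.subspace S" and TW: "T \<subseteq> cv.span W" and fW: "finite W"
    and eq: "cv.dim S = cv.dim T"
  shows "T \<subseteq> S"
proof
  fix t assume tT: "t \<in> T"
  obtain B where B: "B \<subseteq> S" "cv.independent B" "S \<subseteq> cv.span B" "card B = cv.dim S"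
    using cv.basis_exists by blast
  obtain C where C: "C \<subseteq> T" "cv.independent C" "T \<subseteq> cv.span C" "card C = cv.dim T"
    using cv.basis_exists by blast
  have fB: "finite B" using cv.independent_span_bound[OF fW B(2)] B(1) ST TW by blast
  have fC: "finite C" using cv.independent_span_bound[OF fW C(2)] C(1) TW by blast
  show "t \<in> S"
  proof (rule ccontr)
    assume tS: "t \<notin> S"
    have "cv.span B \<subseteq> S" using cv.span_minimal[OF B(1) sS] .
    then have "t \<notin> cv.span B" using tS by blast
    then have ind: "cv.independent (insert t B)" using cv.independent_insertI B(2) by blast
    have "insert t B \<subseteq> cv.span C" using tT B(1) ST C(3) by blast
    then have "card (insert t B) \<le> card C" using cv.independent_span_bound[OF fC ind] by blast
    moreover have "t \<notin> B" using tS B(1) by blast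
    then have "card (insert t B) = card B + 1" using fB by simp
    ultimately show False using B(4) C(4) eq by simp
  qed
qed

lemma cdim_range_eq:
  assumes "trange N A \<subseteq> trange N C" "cdim (trange N A) = cdim (trange N C)"
  shows "trange N A = trange N C"
  using dim_eq_sub[OF assms(1) trange_subspace trange_span] assms finite_idx
  by (auto simp: cdim_eq)


definition msc :: "complex \<Rightarrow> (nat list \<Rightarrow> nat list \<Rightarrow> complex) \<Rightarrow> (nat list \<Rightarrow> nat list \<Rightarrow> complex)" where
  "msc c A = (\<lambda>i j. c * A i j)"

interpretation mv: vector_space msc
  by unfold_locales (auto simp: msc_def algebra_simps fun_eq_iff)

lemma ein_add_right: "ein N A (B + C) = ein N A B + ein N A C"
  by (auto simp: ein_def fun_eq_iff algebra_simps sum.distrib)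
lemma ein_add_left: "ein N (A + B) C = ein N A C + ein N B C"
  by (auto simp: ein_def fun_eq_iff algebra_simps sum.distrib)
lemma ein_msc_right: "ein N A (msc c B) = msc c (ein N A B)"
  by (auto simp: ein_def msc_def fun_eq_iff algebra_simps sum_distrib_left)
lemma ein_msc_left: "ein N (msc c A) B = msc c (ein N A B)"
  by (auto simp: ein_def msc_def fun_eq_iff algebra_simps sum_distrib_left)
lemma ein_sum_right: "ein N A (sum F S) = (\<Sum>s\<in>S. ein N A (F s))"
proof (induction S rule: infinite_finite_induct)
  case (infinite S) show ?case unfolding sum.infinite[OF infinite.hyps] by (rule ein_zero_right)
next
  case empty show ?case unfolding sum.empty by (rule ein_zero_right)
next
  case (insert x F')
  have "ein N A (sum F (insert x F')) = ein N A (F x + sum F F')" by (simp only: sum.insert[OF insert.hyps])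
  also have "\<dots> = ein N A (F x) + (\<Sum>s\<in>F'. ein N A (F s))" by (simp only: ein_add_right insert.IH)
  also have "\<dots> = (\<Sum>s\<in>insert x F'. ein N A (F s))" by (simp only: sum.insert[OF insert.hyps])
  finally show ?case .
qed
lemma ein_sum_left: "ein N (sum F S) A = (\<Sum>s\<in>S. ein N (F s) A)"
proof (induction S rule: infinite_finite_induct)
  case (infinite S) show ?case unfolding sum.infinite[OF infinite.hyps] by (rule ein_zero_left)
next
  case empty show ?case unfolding sum.empty by (rule ein_zero_left)
next
  case (insert x F')
  have "ein N (sum F (insert x F')) A = ein N (F x + sum F F') A" by (simp only: sum.insert[OF insert.hyps])
  also have "\<dots> = ein N (F x) A + (\<Sum>s\<in>F'. ein N (F s) A)" by (simp only: ein_add_left insert.IH)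
  also have "\<dots> = (\<Sum>s\<in>insert x F'. ein N (F s) A)" by (simp only: sum.insert[OF insert.hyps])
  finally show ?case .
qed
lemma tensor2_msc[simp]: "tensor2 N A \<Longrightarrow> tensor2 N (msc c A)"
  by (simp add: tensor2_def msc_def)
lemma tensor2_tpow[simp]: "tensor2 N (tpow N A j)"
  by (cases j) auto

lemma tensor2_sum: "(\<And>s. s \<in> S \<Longrightarrow> tensor2 N (F s)) \<Longrightarrow> tensor2 N (sum F S)"
  by (simp add: tensor2_def fsum_apply)

definition Eb where "Eb p = (\<lambda>i j. if i = fst p \<and> j = snd p then (1::complex) else 0)"

lemma tensor2_span:
  assumes T: "tensor2 N T" shows "T \<in> mv.span (Eb ` (idx N \<times> idx N))"
proof -
  have "T = (\<Sum>p\<in>idx N \<times> idx N. msc (T (fst p) (snd p)) (Eb p))"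
  proof (rule ext, rule ext)
    fix i j
    show "T i j = (\<Sum>p\<in>idx N \<times> idx N. msc (T (fst p) (snd p)) (Eb p)) i j"
    proof (cases "i \<in> idx N \<and> j \<in> idx N")
      case True
      have "(\<Sum>p\<in>idx N \<times> idx N. msc (T (fst p) (snd p)) (Eb p)) i j
          = (\<Sum>p\<in>idx N \<times> idx N. if p = (i, j) then T i j else 0)"
        by (auto simp: fsum_apply msc_def Eb_def intro!: sum.cong)
      also have "\<dots> = T i j" using True finite_idx[of N] by simp
      finally show ?thesis by simp
    next
      case False
      then show ?thesis using T by (auto simp: fsum_apply msc_def Eb_def tensor2_def intro!: sum.neutral)
    qed
  qed
  also have "\<dots> \<in> mv.span (Eb ` (idx N \<times> idx N))"
    by (intro mv.span_sum mv.span_scale mv.span_base) auto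
  finally show ?thesis .
qed

lemma poly_dep:
  assumes TD: "tensor2 N D"
  shows "\<exists>c r. (\<Sum>i\<le>r. msc (c i) (tpow N D i)) = 0 \<and> (\<exists>i\<le>r. c i \<noteq> 0)"
proof -
  define W where "W = Eb ` (idx N \<times> idx N)"
  define r where "r = card W"
  have fW: "finite W" using finite_idx[of N] by (simp add: W_def)
  show ?thesis
  proof (cases "inj_on (tpow N D) {..r}")
    case False
    then obtain i j where ij: "i \<le> r" "j \<le> r" "i < j" "tpow N D i = tpow N D j"
      unfolding inj_on_def by (metis atMost_iff linorder_neqE_nat)
    define c where "c l = (if l = j then 1 else if l = i then -1 else (0::complex))" for l
    have "(\<Sum>l\<le>r. msc (c l) (tpow N D l)) = (\<Sum>l\<in>{i, j}. msc (c l) (tpow N D l))"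
      using ij by (intro sum.mono_neutral_right) (auto simp: c_def msc_def fun_eq_iff)
    also have "\<dots> = 0" using ij by (auto simp: c_def msc_def fun_eq_iff)
    finally show ?thesis using ij by (intro exI[of _ c] exI[of _ r]) (auto simp: c_def)
  next
    case True
    define P where "P = tpow N D ` {..r}"
    have cP: "card P = Suc r" using True by (simp add: P_def card_image)
    have PW: "P \<subseteq> mv.span W" unfolding P_def W_def using tensor2_span[of N] by auto
    have "mv.dependent P"
    proof (rule ccontr)
      assume "mv.independent P"
      then have "card P \<le> card W" using mv.independent_span_bound[OF fW _ PW] by blast
      then show False using cP by (simp add: r_def)
    qed
    then obtain t u where tu: "finite t" "t \<subseteq> P" "(\<Sum>v\<in>t. msc (u v) v) = 0" "\<exists>v\<in>t. u v \<noteq> 0"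
      unfolding mv.dependent_explicit by blast
    define c where "c l = (if tpow N D l \<in> t then u (tpow N D l) else 0)" for l
    have "(\<Sum>l\<le>r. msc (c l) (tpow N D l)) = (\<Sum>v\<in>P. msc (if v \<in> t then u v else 0) v)"
      unfolding P_def using True by (simp add: sum.reindex c_def)
    also have "\<dots> = (\<Sum>v\<in>t. msc (u v) v)"
      using tu(1,2) by (intro sum.mono_neutral_cong_right) (auto simp: P_def msc_def fun_eq_iff finite_imageI)
    also have "\<dots> = 0" by (rule tu(3))
    finally have s: "(\<Sum>l\<le>r. msc (c l) (tpow N D l)) = 0" .
    from tu(4) obtain v where "v \<in> t" "u v \<noteq> 0" by blast
    moreover then obtain l where "l \<le> r" "v = tpow N D l" using tu(2) by (auto simp: P_def)
    ultimately have "l \<le> r \<and> c l \<noteq> 0" by (simp add: c_def)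
    then show ?thesis using s by blast
  qed
qed


lemma tpow_one0: "tensor2 N D \<Longrightarrow> tpow N D 1 = D"
  by (simp add: tid_right)

lemma poly_exists0:
  assumes TD: "tensor2 N D"
  shows "\<exists>m X. tensor2 N X \<and> ein N D X = ein N X D \<and> tpow N D m = ein N (tpow N D (Suc m)) X"
proof -
  obtain c r where cr: "(\<Sum>i\<le>r. msc (c i) (tpow N D i)) = 0" "\<exists>i\<le>r. c i \<noteq> 0"
    using poly_dep[OF TD] by blast
  define m where "m = (LEAST i. c i \<noteq> 0)"
  obtain i0 where i0: "i0 \<le> r" "c i0 \<noteq> 0" using cr(2) by blast
  have cm: "c m \<noteq> 0" unfolding m_def by (rule LeastI[of _ i0]) (rule i0(2))
  have "m \<le> i0" unfolding m_def by (rule Least_le) (rule i0(2))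
  then have mr: "m \<le> r" using i0(1) by simp
  have lt: "i < m \<Longrightarrow> c i = 0" for i unfolding m_def using not_less_Least by blast
  have padd: "tpow N D (a + b) = ein N (tpow N D a) (tpow N D b)" for a b
    by (induction a) (auto simp: tid_left TD ein_assoc)
  have pS: "tpow N D (Suc j) = ein N (tpow N D j) D" for j
    using padd[of j 1] by (simp only: Suc_eq_plus1 tpow_one0 tid_right TD)
  define Q where "Q = (\<Sum>i\<in>{m<..r}. msc (c i) (tpow N D (i - Suc m)))"
  have split: "{..r} = {..<m} \<union> ({m} \<union> {m<..r})" using mr by auto
  have "(\<Sum>i\<le>r. msc (c i) (tpow N D i)) = (\<Sum>i\<in>{..<m}. msc (c i) (tpow N D i))
      + (msc (c m) (tpow N D m) + (\<Sum>i\<in>{m<..r}. msc (c i) (tpow N D i)))"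
  proof -
    have d1: "{..<m} \<inter> ({m} \<union> {m<..r}) = {}" by auto
    have d2: "{m} \<inter> {m<..r} = {}" by auto
    show ?thesis unfolding split
      by (simp only: sum.union_disjoint[OF _ _ d1] sum.union_disjoint[OF _ _ d2] finite_lessThan
        finite_greaterThanAtMost finite_UnI finite.emptyI finite_insert sum.insert empty_iff not_False_eq_True sum.empty add_0_right)
  qed
  also have "(\<Sum>i\<in>{..<m}. msc (c i) (tpow N D i)) = 0"
    using lt by (intro sum.neutral) (auto simp: msc_def fun_eq_iff)
  also have "(\<Sum>i\<in>{m<..r}. msc (c i) (tpow N D i)) = ein N (tpow N D (Suc m)) Q"
    unfolding Q_def ein_sum_right ein_msc_right
  proof (rule sum.cong)
    fix i assume "i \<in> {m<..r}"
    then have "Suc m + (i - Suc m) = i" by auto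
    then show "msc (c i) (tpow N D i) = msc (c i) (ein N (tpow N D (Suc m)) (tpow N D (i - Suc m)))"
      using padd[of "Suc m" "i - Suc m"] by simp
  qed simp
  finally have "(\<Sum>i\<le>r. msc (c i) (tpow N D i)) = 0 + (msc (c m) (tpow N D m) + ein N (tpow N D (Suc m)) Q)" .
  then have eq0: "msc (c m) (tpow N D m) + ein N (tpow N D (Suc m)) Q = 0"
    unfolding cr(1) add_0_left by (rule sym)
  define X where "X = msc (- 1 / c m) Q"
  have "ein N (tpow N D (Suc m)) X = msc (- 1 / c m) (ein N (tpow N D (Suc m)) Q)"
    by (simp only: X_def ein_msc_right)
  also have "ein N (tpow N D (Suc m)) Q = - msc (c m) (tpow N D m)"
    using eq0 by (metis add.commute eq_neg_iff_add_eq_0)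
  also have "msc (- 1 / c m) (- msc (c m) (tpow N D m)) = tpow N D m"
    using cm by (auto simp: msc_def fun_eq_iff)
  finally have e: "tpow N D m = ein N (tpow N D (Suc m)) X" by simp
  have "ein N D Q = ein N Q D"
    unfolding Q_def ein_sum_right ein_sum_left ein_msc_right ein_msc_left
    by (rule sum.cong) (simp_all add: pS[symmetric])
  then have c: "ein N D X = ein N X D" by (simp only: X_def ein_msc_right ein_msc_left)
  have "tensor2 N X" unfolding X_def Q_def by (intro tensor2_msc tensor2_sum) simp
  then show ?thesis using e c by blast
qed


context fixes N :: "nat list" begin
abbreviation mul (infixr "\<cdot>" 70) where "A \<cdot> B \<equiv> ein N A B"
abbreviation I where "I \<equiv> tid N"
abbreviation T2 where "T2 A \<equiv> tensor2 N A"
abbreviation pw where "pw A j \<equiv> tpow N A j"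


lemma tpow_add: "T2 D \<Longrightarrow> pw D (a + b) = pw D a \<cdot> pw D b"
  by (induction a) (auto simp: tid_left ein_assoc)

lemma tpow_one: "T2 D \<Longrightarrow> pw D 1 = D"
  by (simp add: tid_right)

lemma tpow_Suc': "T2 D \<Longrightarrow> pw D (Suc j) = pw D j \<cdot> D"
  using tpow_add[of D j 1] by (simp add: tid_right)

lemma tail: "A \<cdot> B = C \<Longrightarrow> A \<cdot> B \<cdot> Z = C \<cdot> Z"
  by (metis ein_assoc)

lemma comm_pow1: "T2 A \<Longrightarrow> T2 B \<Longrightarrow> A \<cdot> B = B \<cdot> A \<Longrightarrow> pw A i \<cdot> B = B \<cdot> pw A i"
proof (induction i)
  case 0 then show ?case by (simp add: tid_left tid_right)
next
  case (Suc i)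
  have "pw A (Suc i) \<cdot> B = A \<cdot> (pw A i \<cdot> B)" by (simp add: ein_assoc)
  also have "\<dots> = A \<cdot> B \<cdot> pw A i" using Suc by simp
  also have "\<dots> = B \<cdot> A \<cdot> pw A i" using Suc(4) tail by metis
  finally show ?case by simp
qed

lemma comm_pow: "T2 A \<Longrightarrow> T2 B \<Longrightarrow> A \<cdot> B = B \<cdot> A \<Longrightarrow> pw A i \<cdot> pw B j = pw B j \<cdot> pw A i"
  by (metis comm_pow1 tensor2_tpow)

lemma herm2:
  assumes "T2 M" "ctrans M = M" "T2 U" "M \<cdot> M \<cdot> U = 0"
  shows "M \<cdot> U = 0"
proof (rule ctrans_self_zero[of N])
  show "T2 (M \<cdot> U)" by simp
  have "ctrans (M \<cdot> U) \<cdot> (M \<cdot> U) = ctrans U \<cdot> M \<cdot> M \<cdot> U"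
    using assms by (simp add: ctrans_ein ein_assoc)
  then show "ctrans (M \<cdot> U) \<cdot> (M \<cdot> U) = 0" using assms by simp
qed

lemma herm_pow:
  assumes "T2 M" "ctrans M = M" "T2 Z"
  shows "m \<ge> 1 \<Longrightarrow> pw M m \<cdot> Z = 0 \<Longrightarrow> M \<cdot> Z = 0"
proof (induction m rule: nat_less_induct)
  case (1 m)
  show ?case
  proof (cases m)
    case 0 then show ?thesis using 1 by simp
  next
    case (Suc n)
    show ?thesis
    proof (cases n)
      case 0 then show ?thesis using 1 Suc assms by (simp add: ein_assoc tid_left)
    next
      case (Suc n')
      have "M \<cdot> M \<cdot> (pw M n' \<cdot> Z) = 0" using 1(3) \<open>m = Suc n\<close> Suc by (auto simp: ein_assoc fun_eq_iff)
      then have "M \<cdot> (pw M n' \<cdot> Z) = 0" using herm2[OF assms(1,2)] by simp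
      then have "pw M n \<cdot> Z = 0" using Suc by (simp add: ein_assoc)
      then show ?thesis using 1(1) \<open>m = Suc n\<close> Suc by auto
    qed
  qed
qed

lemma poly_exists:
  "T2 A \<Longrightarrow> \<exists>m X. T2 X \<and> A \<cdot> X = X \<cdot> A \<and> pw A m = pw A (Suc m) \<cdot> X"
  using poly_exists0[of N A] by blast

lemma herm_group:
  assumes "T2 M" "ctrans M = M"
  shows "\<exists>X. T2 X \<and> M \<cdot> X = X \<cdot> M \<and> M \<cdot> M \<cdot> X = M"
proof -
  obtain m X where X: "T2 X" "M \<cdot> X = X \<cdot> M" "pw M m = pw M (Suc m) \<cdot> X"
    using poly_exists[OF assms(1)] by blast
  have "pw M m \<cdot> M \<cdot> X = pw M (Suc m) \<cdot> X"
    using tail[OF tpow_Suc'[OF assms(1), symmetric]] by simp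
  then have "pw M m \<cdot> (I - M \<cdot> X) = pw M m - pw M (Suc m) \<cdot> X"
    using assms by (simp add: ein_diff_right tid_right)
  then have Z: "pw M m \<cdot> (I - M \<cdot> X) = 0" using X(3) by (metis diff_self)
  show ?thesis
  proof (cases m)
    case 0
    then have "I = M \<cdot> X" using X(3) assms \<open>m=0\<close> by (metis tpow.simps(1) tpow_one One_nat_def)
    then have "M \<cdot> M \<cdot> X = M" using assms by (metis tid_right)
    then show ?thesis using X by blast
  next
    case (Suc n)
    then have "M \<cdot> (I - M \<cdot> X) = 0" using herm_pow[OF assms, of "I - M \<cdot> X" m] Z by simp
    then have "M \<cdot> M \<cdot> X = M" using assms by (simp add: ein_diff_right tid_right)
    then show ?thesis using X by blast
  qed
qed

definition isgrp where "isgrp M G \<longleftrightarrow> T2 G \<and> M \<cdot> G \<cdot> M = M \<and> G \<cdot> M \<cdot> G = G \<and> M \<cdot> G = G \<cdot> M"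

lemma grp_unique:
  assumes "isgrp M G" "isgrp M H"
  shows "G = H"
proof -
  have g1: "M \<cdot> G \<cdot> M = M" "G \<cdot> M \<cdot> G = G" "M \<cdot> G = G \<cdot> M" "T2 G" using assms by (auto simp: isgrp_def)
  have h1: "M \<cdot> H \<cdot> M = M" "H \<cdot> M \<cdot> H = H" "M \<cdot> H = H \<cdot> M" "T2 H" using assms by (auto simp: isgrp_def)
  have P1: "M \<cdot> G = M \<cdot> H \<cdot> M \<cdot> G" using h1 tail by metis
  have P2: "G \<cdot> M = G \<cdot> M \<cdot> H \<cdot> M" using h1 by metis
  have "M \<cdot> G = M \<cdot> G \<cdot> M \<cdot> H" using P2 g1(3) h1(3) by (metis ein_assoc)
  also have "\<dots> = M \<cdot> H" using g1 tail by metis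
  finally have E: "M \<cdot> G = M \<cdot> H" .
  have "G = G \<cdot> M \<cdot> G" using g1 by simp
  also have "\<dots> = G \<cdot> M \<cdot> H" using E by simp
  also have "\<dots> = H \<cdot> M \<cdot> H" using E g1(3) h1(3) by (metis ein_assoc)
  also have "\<dots> = H" using h1 by simp
  finally show ?thesis .
qed

definition ismp where "ismp D Y \<longleftrightarrow> tensor2 N Y \<and> ein N (ein N D Y) D = D \<and> ein N (ein N Y D) Y = Y
      \<and> ctrans (ein N D Y) = ein N D Y \<and> ctrans (ein N Y D) = ein N Y D"

lemma mp_unique:
  assumes "ismp D Y" "ismp D Z"
  shows "Y = Z"
proof -
  have y: "D \<cdot> Y \<cdot> D = D" "Y \<cdot> D \<cdot> Y = Y" "ctrans (D \<cdot> Y) = D \<cdot> Y" "ctrans (Y \<cdot> D) = Y \<cdot> D"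
    using assms(1) by (auto simp: ismp_def ein_assoc)
  have z: "D \<cdot> Z \<cdot> D = D" "Z \<cdot> D \<cdot> Z = Z" "ctrans (D \<cdot> Z) = D \<cdot> Z" "ctrans (Z \<cdot> D) = Z \<cdot> D"
    using assms(2) by (auto simp: ismp_def ein_assoc)
  have "D \<cdot> Y = ctrans (D \<cdot> Y)" using y by simp
  also have "\<dots> = ctrans Y \<cdot> ctrans D" by (simp add: ctrans_ein)
  also have "\<dots> = ctrans Y \<cdot> ctrans (D \<cdot> Z \<cdot> D)" using z by simp
  also have "\<dots> = ctrans (D \<cdot> Y) \<cdot> ctrans (D \<cdot> Z)" by (simp add: ctrans_ein ein_assoc)
  also have "\<dots> = D \<cdot> Y \<cdot> D \<cdot> Z" using y z by (simp add: ein_assoc)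
  also have "\<dots> = D \<cdot> Z" using y tail by metis
  finally have e1: "D \<cdot> Y = D \<cdot> Z" .
  have "Y \<cdot> D = ctrans (Y \<cdot> D)" using y by simp
  also have "\<dots> = ctrans D \<cdot> ctrans Y" by (simp add: ctrans_ein)
  also have "\<dots> = ctrans (D \<cdot> Z \<cdot> D) \<cdot> ctrans Y" using z by simp
  also have "\<dots> = ctrans (Z \<cdot> D) \<cdot> ctrans (Y \<cdot> D)" by (simp add: ctrans_ein ein_assoc)
  also have "\<dots> = Z \<cdot> D \<cdot> Y \<cdot> D" using y z by (simp add: ein_assoc)
  also have "\<dots> = Z \<cdot> D" using y by simp
  finally have e2: "Y \<cdot> D = Z \<cdot> D" .
  have "Y = Y \<cdot> D \<cdot> Y" using y by simp
  also have "\<dots> = Y \<cdot> D \<cdot> Z" using e1 by simp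
  also have "\<dots> = Z \<cdot> D \<cdot> Z" using e2 tail by metis
  also have "\<dots> = Z" using z by simp
  finally show ?thesis .
qed

lemma mp_exists:
  assumes TD: "T2 D"
  shows "\<exists>Y. ismp D Y"
proof -
  define M where "M = ctrans D \<cdot> D"
  have TM: "T2 M" and HM: "ctrans M = M" using TD by (auto simp: M_def ctrans_ein)
  have Mt: "ctrans D \<cdot> D \<cdot> Z = M \<cdot> Z" for Z by (simp add: M_def ein_assoc)
  obtain X where X: "T2 X" "M \<cdot> X = X \<cdot> M" "M \<cdot> M \<cdot> X = M"
    using herm_group[OF TM HM] by blast
  have c1: "X \<cdot> M = M \<cdot> X" using X(2) by simp
  have c1': "X \<cdot> M \<cdot> Z = M \<cdot> X \<cdot> Z" for Z using tail[OF X(2)[symmetric]] by (simp add: ein_assoc)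
  have r: "M \<cdot> M \<cdot> X = M" using X(3) by simp
  have r': "M \<cdot> M \<cdot> X \<cdot> Z = M \<cdot> Z" for Z using tail[OF X(3)] by (simp add: ein_assoc)
  define G where "G = M \<cdot> X \<cdot> X"
  have g: "isgrp M G" unfolding isgrp_def G_def
    by (simp add: c1 c1' r r' ein_assoc)
  have gc: "isgrp M (ctrans G)"
  proof -
    have a: "T2 G" "M \<cdot> G \<cdot> M = M" "G \<cdot> M \<cdot> G = G" "M \<cdot> G = G \<cdot> M" using g by (auto simp: isgrp_def)
    have e1: "ctrans (M \<cdot> G \<cdot> M) = M \<cdot> ctrans G \<cdot> M" using HM by (simp add: ctrans_ein ein_assoc)
    have e2: "ctrans (G \<cdot> M \<cdot> G) = ctrans G \<cdot> M \<cdot> ctrans G" using HM by (simp add: ctrans_ein ein_assoc)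
    have e3: "ctrans (M \<cdot> G) = ctrans G \<cdot> M" "ctrans (G \<cdot> M) = M \<cdot> ctrans G" using HM by (simp_all add: ctrans_ein)
    have "M \<cdot> ctrans G \<cdot> M = M" by (simp only: e1[symmetric] a(2) HM)
    moreover have "ctrans G \<cdot> M \<cdot> ctrans G = ctrans G" by (simp only: e2[symmetric] a(3))
    moreover have "M \<cdot> ctrans G = ctrans G \<cdot> M" by (simp only: e3[symmetric] a(4))
    ultimately show ?thesis unfolding isgrp_def using a by simp
  qed
  have GH: "ctrans G = G" using grp_unique[OF gc g] .
  define P where "P = M \<cdot> X"
  have MG: "M \<cdot> G = P" and GM: "G \<cdot> M = P" unfolding G_def P_def
    by (simp_all add: c1 c1' r r' ein_assoc)
  have HP: "ctrans P = P" by (simp only: GM[symmetric] ctrans_ein HM GH MG)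
  have TG: "T2 G" "T2 P" by (simp_all add: G_def P_def)
  have DP: "D \<cdot> P = D"
  proof -
    define B where "B = D - D \<cdot> P"
    have "ctrans B \<cdot> B = (ctrans D - P \<cdot> ctrans D) \<cdot> (D - D \<cdot> P)"
      by (simp add: B_def ctrans_diff ctrans_ein HP)
    also have "\<dots> = M - M \<cdot> P - (P \<cdot> M - P \<cdot> M \<cdot> P)"
      by (simp add: ein_diff_left ein_diff_right Mt ein_assoc M_def[symmetric])
    also have "\<dots> = 0" unfolding P_def by (simp add: c1 c1' r r' ein_assoc)
    finally have "B = 0" using ctrans_self_zero[of N B] TD TG by (simp add: B_def)
    then show ?thesis by (simp add: B_def)
  qed
  define Y where "Y = G \<cdot> ctrans D"
  have a1: "D \<cdot> G \<cdot> ctrans D \<cdot> D = D"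
    using DP GM by (simp add: ein_assoc Mt M_def[symmetric])
  have gmg: "G \<cdot> M \<cdot> G = G" using g unfolding isgrp_def by blast
  then have "G \<cdot> M \<cdot> G \<cdot> Z = G \<cdot> Z" for Z using tail[OF gmg] by (simp add: ein_assoc)
  then have a2: "G \<cdot> ctrans D \<cdot> D \<cdot> G \<cdot> ctrans D = G \<cdot> ctrans D"
    by (simp add: ein_assoc Mt M_def[symmetric])
  have a3: "ctrans (D \<cdot> G \<cdot> ctrans D) = D \<cdot> G \<cdot> ctrans D"
    by (simp add: ctrans_ein GH ein_assoc)
  have a4: "ctrans (G \<cdot> ctrans D \<cdot> D) = G \<cdot> ctrans D \<cdot> D"
    using GM HP by (simp add: ein_assoc Mt M_def[symmetric])
  have "ismp D Y" unfolding ismp_def Y_def using a1 a2 a3 a4 by (simp add: ein_assoc)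
  then show ?thesis by blast
qed

definition isdr where "isdr D k Y \<longleftrightarrow> tensor2 N Y \<and> ein N Y (tpow N D (Suc k)) = tpow N D k
      \<and> ein N (ein N Y D) Y = Y \<and> ein N D Y = ein N Y D"

lemma dr_L:
  assumes "T2 D" "T2 Y" "Y \<cdot> D \<cdot> Y = Y" "D \<cdot> Y = Y \<cdot> D"
  shows "pw Y (Suc j) \<cdot> pw D j = Y"
proof (induction j)
  case 0 then show ?case using assms by (simp add: tid_right)
next
  case (Suc j)
  have "pw Y (Suc (Suc j)) \<cdot> pw D (Suc j) = Y \<cdot> (pw Y (Suc j) \<cdot> pw D j) \<cdot> D"
    using assms by (simp only: tpow.simps(2)[of N Y "Suc j"] tpow_Suc'[of D j] ein_assoc)
  also have "\<dots> = Y \<cdot> D \<cdot> Y" using Suc assms(4) by simp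
  also have "\<dots> = Y" using assms by simp
  finally show ?case .
qed

lemma dr_unique:
  assumes TD: "T2 D" and y: "isdr D k Y" and z: "isdr D k Z"
  shows "Y = Z"
proof -
  have Y: "T2 Y" "Y \<cdot> pw D (Suc k) = pw D k" "Y \<cdot> D \<cdot> Y = Y" "D \<cdot> Y = Y \<cdot> D"
    using y by (auto simp: isdr_def ein_assoc)
  have Z: "T2 Z" "Z \<cdot> pw D (Suc k) = pw D k" "Z \<cdot> D \<cdot> Z = Z" "D \<cdot> Z = Z \<cdot> D"
    using z by (auto simp: isdr_def ein_assoc)
  have "Y = pw Y (Suc k) \<cdot> pw D k" using dr_L[OF TD Y(1,3,4)] by simp
  also have "\<dots> = pw Y (Suc k) \<cdot> Z \<cdot> pw D (Suc k)" using Z(2) by simp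
  also have "\<dots> = pw Y (Suc k) \<cdot> pw D (Suc k) \<cdot> Z" using comm_pow1[OF TD Z(1) Z(4), of "Suc k"] by simp
  also have "\<dots> = (pw Y (Suc k) \<cdot> pw D k) \<cdot> D \<cdot> Z"
    by (simp only: tpow_Suc'[OF TD, of k] ein_assoc)
  also have "\<dots> = Y \<cdot> D \<cdot> Z" using dr_L[OF TD Y(1,3,4)] by simp
  finally have e1: "Y = Y \<cdot> D \<cdot> Z" .
  have "Z = pw Z (Suc k) \<cdot> pw D k" using dr_L[OF TD Z(1,3,4)] by simp
  also have "\<dots> = pw D k \<cdot> pw Z (Suc k)" by (rule comm_pow[OF Z(1) TD Z(4)[symmetric]])
  also have "\<dots> = (Y \<cdot> pw D (Suc k)) \<cdot> pw Z (Suc k)" using Y(2) by simp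
  also have "\<dots> = Y \<cdot> D \<cdot> (pw D k \<cdot> pw Z (Suc k))" by (simp add: ein_assoc)
  also have "pw D k \<cdot> pw Z (Suc k) = Z"
    using dr_L[OF TD Z(1,3,4), of k] comm_pow[OF Z(1) TD Z(4)[symmetric], of "Suc k" k] by simp
  finally have e2: "Z = Y \<cdot> D \<cdot> Z" by simp
  show ?thesis using e1 e2 by simp
qed

lemma dr_exists:
  assumes TD: "T2 D" and TW: "T2 W" and kW: "pw D k = pw D (Suc k) \<cdot> W"
  shows "\<exists>Y. isdr D k Y"
proof -
  obtain m X where X: "T2 X" "D \<cdot> X = X \<cdot> D" "pw D m = pw D (Suc m) \<cdot> X"
    using poly_exists[OF TD] by blast
  define q where "q a b = pw D a \<cdot> pw X b" for a b
  have cm: "pw X b \<cdot> pw D c = pw D c \<cdot> pw X b" for b c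
    using comm_pow[OF X(1) TD X(2)[symmetric]] by simp
  have qmul: "q a b \<cdot> q c d = q (a + c) (b + d)" for a b c d
  proof -
    have "q a b \<cdot> q c d = pw D a \<cdot> (pw X b \<cdot> pw D c) \<cdot> pw X d" by (simp add: q_def ein_assoc)
    also have "\<dots> = (pw D a \<cdot> pw D c) \<cdot> (pw X b \<cdot> pw X d)" by (simp add: cm ein_assoc)
    also have "\<dots> = q (a + c) (b + d)" by (simp add: q_def tpow_add[OF TD] tpow_add[OF X(1)])
    finally show ?thesis .
  qed
  have qred: "q (m + j) j = pw D m" for j
  proof (induction j)
    case 0 then show ?case by (simp add: q_def tid_right)
  next
    case (Suc j)
    have e: "m + Suc j = j + Suc m" by simp
    have "q (m + Suc j) (Suc j) = (pw D j \<cdot> pw D (Suc m)) \<cdot> (X \<cdot> pw X j)"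
      unfolding q_def e tpow_add[OF TD] by (simp only: tpow.simps(2)[of N X j])
    also have "\<dots> = pw D j \<cdot> (pw D (Suc m) \<cdot> X) \<cdot> pw X j" by (simp only: ein_assoc)
    also have "\<dots> = pw D j \<cdot> pw D m \<cdot> pw X j" by (simp only: X(3)[symmetric])
    also have "\<dots> = q (m + j) j" by (simp add: q_def tpow_add[OF TD] ein_assoc add.commute)
    finally show ?case using Suc by simp
  qed
  have q0: "q a 0 = pw D a" for a by (simp add: q_def tid_right)
  have qD: "D = q 1 0" by (simp add: q0 tpow_one[OF TD] tid_right[OF TD])
  define Y0 where "Y0 = q m (Suc m)"
  have TY: "T2 Y0" by (simp add: Y0_def q_def)
  have c: "D \<cdot> Y0 = Y0 \<cdot> D" unfolding Y0_def qD qmul by simp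
  have yy: "Y0 \<cdot> D \<cdot> Y0 = Y0"
  proof -
    have "Y0 \<cdot> D \<cdot> Y0 = q (m + Suc m) (Suc m) \<cdot> q 0 (Suc m)"
      unfolding Y0_def qD by (simp only: qmul ein_assoc[symmetric]) simp
    also have "\<dots> = Y0" unfolding qred Y0_def by (simp only: q0[symmetric] qmul) simp
    finally show ?thesis .
  qed
  have ym: "Y0 \<cdot> pw D (Suc m) = pw D m"
    unfolding Y0_def q0[symmetric] qmul by (simp only: qred add_0_right q0)
  have Wpow: "pw D k = pw D (k + i) \<cdot> pw W i" for i
  proof (induction i)
    case 0 then show ?case by (simp add: tid_right)
  next
    case (Suc i)
    have e: "k + Suc i = i + Suc k" by simp
    have "pw D (k + Suc i) \<cdot> pw W (Suc i) = (pw D i \<cdot> pw D (Suc k)) \<cdot> (W \<cdot> pw W i)"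
      unfolding e tpow_add[OF TD] by (simp only: tpow.simps(2)[of N W i])
    also have "\<dots> = pw D i \<cdot> (pw D (Suc k) \<cdot> W) \<cdot> pw W i" by (simp only: ein_assoc)
    also have "\<dots> = pw D i \<cdot> pw D k \<cdot> pw W i" by (simp only: kW[symmetric])
    also have "\<dots> = pw D (k + i) \<cdot> pw W i" by (simp add: tpow_add[OF TD] ein_assoc add.commute)
    finally show ?case using Suc by simp
  qed
  have yk: "Y0 \<cdot> pw D k = pw D k \<cdot> W"
  proof -
    have "Y0 \<cdot> pw D k = Y0 \<cdot> pw D (k + Suc m) \<cdot> pw W (Suc m)" using Wpow[of "Suc m"] by simp
    also have "\<dots> = (Y0 \<cdot> pw D (Suc m)) \<cdot> pw D k \<cdot> pw W m \<cdot> W"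
      by (simp only: add.commute[of k "Suc m"] tpow_add[OF TD] tpow_Suc'[OF TW] ein_assoc)
    also have "\<dots> = pw D (k + m) \<cdot> pw W m \<cdot> W"
      by (simp only: ym tpow_add[OF TD] ein_assoc add.commute[of k m])
    also have "\<dots> = pw D k \<cdot> W" using Wpow[of m] by (simp add: ein_assoc)
    finally show ?thesis .
  qed
  have "Y0 \<cdot> pw D (Suc k) = D \<cdot> Y0 \<cdot> pw D k" using tail[OF c, of "pw D k"] by (simp add: ein_assoc)
  also have "\<dots> = pw D (Suc k) \<cdot> W" using yk by (simp add: ein_assoc)
  also have "\<dots> = pw D k" by (rule kW[symmetric])
  finally have "Y0 \<cdot> pw D (Suc k) = pw D k" .
  then have "isdr D k Y0" unfolding isdr_def using TY yy c by (simp add: ein_assoc)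
  then show ?thesis by blast
qed

end

lemma trange_mul: "trange N (ein N B C) \<subseteq> trange N B"
  unfolding trange_def by (auto simp: einv_einv[symmetric] intro: tensor1_einv)

lemma trange_pow_Suc: "tensor2 N D \<Longrightarrow> trange N (tpow N D (Suc k)) \<subseteq> trange N (tpow N D k)"
  using trange_mul[of N "tpow N D k" D] tpow_Suc'[of N D k] by simp

lemma stab: "tensor2 N D \<Longrightarrow> \<exists>n. cdim (trange N (tpow N D n)) = cdim (trange N (tpow N D (Suc n)))"
proof -
  assume TD: "tensor2 N D"
  obtain m X where X: "tensor2 N X" "tpow N D m = ein N (tpow N D (Suc m)) X"
    using poly_exists0[OF TD] by blast
  have "trange N (tpow N D m) \<subseteq> trange N (tpow N D (Suc m))"
    using trange_mul[of N "tpow N D (Suc m)" X] by (simp only: X(2)[symmetric])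
  then have "trange N (tpow N D m) = trange N (tpow N D (Suc m))"
    using trange_pow_Suc[OF TD, of m] by blast
  then show ?thesis by (intro exI[of _ m]) simp
qed

definition ev where "ev j = (\<lambda>i. if i = j then (1::complex) else 0)"

lemma einv_ev: "i \<in> idx N \<Longrightarrow> j \<in> idx N \<Longrightarrow> einv N A (ev j) i = A i j"
proof -
  assume a: "i \<in> idx N" "j \<in> idx N"
  have "einv N A (ev j) i = (\<Sum>k\<in>idx N. if k = j then A i k else 0)"
    using a by (simp add: einv_def ev_def) (rule sum.cong, auto)
  also have "\<dots> = A i j" using a finite_idx[of N] by simp
  finally show ?thesis .
qed

lemma W_exists:
  assumes TD: "tensor2 N D" and k: "tind N D = k"
  shows "\<exists>W. tensor2 N W \<and> tpow N D k = ein N (tpow N D (Suc k)) W"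
proof -
  have "cdim (trange N (tpow N D k)) = cdim (trange N (tpow N D (Suc k)))"
    unfolding k[symmetric] tind_def by (rule LeastI_ex[OF stab[OF TD]])
  then have R: "trange N (tpow N D k) = trange N (tpow N D (Suc k))"
    using cdim_range_eq[OF trange_pow_Suc[OF TD, of k]] by simp
  define F where "F j = (SOME F. tensor1 N F \<and> einv N (tpow N D k) (ev j) = einv N (tpow N D (Suc k)) F)" for j
  have F: "tensor1 N (F j) \<and> einv N (tpow N D k) (ev j) = einv N (tpow N D (Suc k)) (F j)" for j
  proof -
    have "einv N (tpow N D k) (ev j) \<in> trange N (tpow N D k)"
      unfolding trange_def
      by (rule CollectI, rule exI[of _ "einv N (tid N) (ev j)"]) (simp add: einv_einv tid_right)
    then have "einv N (tpow N D k) (ev j) \<in> trange N (tpow N D (Suc k))" using R by simp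
    then obtain G where "tensor1 N G" "einv N (tpow N D k) (ev j) = einv N (tpow N D (Suc k)) G"
      unfolding trange_def by blast
    then show ?thesis unfolding F_def by (rule someI[of _ G, OF conjI])
  qed
  define W where "W = (\<lambda>i j. if j \<in> idx N then F j i else 0)"
  have TW: "tensor2 N W" using F unfolding W_def tensor2_def tensor1_def by auto
  have "tpow N D k = ein N (tpow N D (Suc k)) W"
  proof (rule ext, rule ext)
    fix i j
    show "tpow N D k i j = ein N (tpow N D (Suc k)) W i j"
    proof (cases "i \<in> idx N \<and> j \<in> idx N")
      case True
      have "ein N (tpow N D (Suc k)) W i j = einv N (tpow N D (Suc k)) (F j) i"
        using True by (simp add: ein_def einv_def W_def)
      also have "\<dots> = einv N (tpow N D k) (ev j) i" using F by simp
      also have "\<dots> = tpow N D k i j" using True einv_ev by blast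
      finally show ?thesis by simp
    next
      case False
      then show ?thesis using tensor2_tpow[of N D k] by (auto simp: ein_def tensor2_def)
    qed
  qed
  then show ?thesis using TW by blast
qed

lemma drazin_prop:
  assumes TD: "tensor2 N D"
  shows "isdr N D (tind N D) (drazin N D)"
proof -
  obtain W where W: "tensor2 N W" "tpow N D (tind N D) = ein N (tpow N D (Suc (tind N D))) W"
    using W_exists[OF TD refl] by blast
  obtain Y where Y: "isdr N D (tind N D) Y" using dr_exists[OF TD W] by blast
  have "drazin N D = Y" unfolding drazin_def Let_def isdr_def[symmetric]
    by (rule the_equality) (use Y dr_unique[OF TD] in blast)+
  then show ?thesis using Y by simp
qed

lemma mpinv_prop:
  assumes TD: "tensor2 N D"
  shows "ismp N D (mpinv N D)"
proof -
  obtain Y where Y: "ismp N D Y" using mp_exists[OF TD] by blast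
  have "mpinv N D = Y" unfolding mpinv_def ismp_def[symmetric]
    by (rule the_equality) (use Y mp_unique in blast)+
  then show ?thesis using Y by simp
qed


theorem mainTheorem14:
  fixes N :: "nat list" and D :: "nat list \<Rightarrow> nat list \<Rightarrow> complex"
    and B :: "nat list \<Rightarrow> complex" and k :: nat
  assumes "N \<noteq> []" and "\<forall>n\<in>set N. 0 < n"
    and "tensor2 N D"
    and "tind N D = k"
    and "B \<in> trange N (tpow N D k)"
  shows "einv N D (einv N (cmp N D) B) = B
    \<and> einv N (cmp N D) B \<in> trange N (ein N (mpinv N D) (tpow N D k))
    \<and> (\<forall>Z. tensor1 N Z \<and> einv N D Z = B \<and> Z \<in> trange N (ein N (mpinv N D) (tpow N D k))
           \<longrightarrow> Z = einv N (cmp N D) B)"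
  proof -
  note TD = assms(3)
  define Dm where "Dm = mpinv N D"
  define Dd where "Dd = drazin N D"
  define Pk where "Pk = tpow N D k"
  have mp: "ismp N D Dm" unfolding Dm_def by (rule mpinv_prop[OF TD])
  have dr: "isdr N D k Dd" unfolding Dd_def using drazin_prop[OF TD] assms(4) by simp
  have F1: "ein N D (ein N Dm D) = D" using mp by (simp add: ismp_def ein_assoc)
  have F2: "ein N Dd (tpow N D (Suc k)) = Pk" using dr by (simp add: isdr_def Pk_def)
  have F3: "ein N D Dd = ein N Dd D" using dr by (simp add: isdr_def)
  have "ein N Dd (tpow N D (Suc k)) = ein N D (ein N Dd Pk)"
    unfolding Pk_def using F3 by (simp add: ein_assoc[symmetric])
  then have K2: "ein N D (ein N Dd Pk) = Pk" using F2 by simp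
  have K1: "ein N D (ein N Dm Pk) = Pk"
  proof -
    have "ein N D (ein N Dm Pk) = ein N D (ein N Dm (ein N D (ein N Dd Pk)))" using K2 by simp
    also have "\<dots> = ein N (ein N D (ein N Dm D)) (ein N Dd Pk)" by (simp add: ein_assoc)
    also have "\<dots> = Pk" using F1 K2 by simp
    finally show ?thesis .
  qed
  have CP: "ein N (cmp N D) Pk = ein N Dm Pk"
  proof -
    have "ein N (cmp N D) Pk = ein N Dm (ein N D (ein N Dd (ein N D (ein N Dm Pk))))"
      by (simp add: cmp_def Dm_def Dd_def ein_assoc)
    also have "\<dots> = ein N Dm Pk" using K1 K2 by simp
    finally show ?thesis .
  qed
  obtain E where E: "tensor1 N E" "B = einv N Pk E" using assms(5) by (auto simp: trange_def Pk_def)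
  have CB: "einv N (cmp N D) B = einv N (ein N Dm Pk) E" using CP E by (simp add: einv_einv)
  have i: "einv N D (einv N (cmp N D) B) = B"
    using CB E K1 by (simp add: einv_einv)
  have ii: "einv N (cmp N D) B \<in> trange N (ein N (mpinv N D) (tpow N D k))"
    using CB E unfolding trange_def Dm_def Pk_def by blast
  have iii: "Z = einv N (cmp N D) B" if Z: "tensor1 N Z" "einv N D Z = B"
    "Z \<in> trange N (ein N (mpinv N D) (tpow N D k))" for Z
  proof -
    obtain G where G: "tensor1 N G" "Z = einv N (ein N Dm Pk) G"
      using Z(3) by (auto simp: trange_def Dm_def Pk_def)
    have "einv N Pk G = B" using Z(2) G K1 by (simp add: einv_einv)
    then have "Z = einv N Dm B" using G by (simp add: einv_einv[symmetric])
    also have "\<dots> = einv N (cmp N D) B" using CB E by (simp add: einv_einv)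
    finally show ?thesis .
  qed
  show ?thesis using i ii iii by blast
qed

end
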